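(* Let $k\ge 3$ be an odd integer. Then $S_3(k;k)\ge 2(k^2-k-1)$.
   Context: Let $k,r$ be positive integers with $r\mid k$. A solution to $\mathcal{E}$ is a $k$-tuple $(x_1,\dots,x_k)$ of positive integers (not necessarily distinct) with $\sum_{i=1}^{k-1}x_i=x_k$; it lies in $[1,n]$ if all $x_i\in\{1,\dots,n\}$. Given a coloring $\chi$ of $[1,n]$ with colors in $\{0,1,\dots,r-1\}$ (viewed as integers), a solution is $r$-zero-sum if $\sum_{i=1}^k\chi(x_i)\equiv 0\pmod r$. $S_3(k;r)$ denotes the least positive integer $n$ such that every coloring $\chi:[1,n]\to\{0,1,\dots,r-1\}$ admits an $r$-zero-sum solution to $\mathcal{E}$ in $[1,n]$. *)

theory Defs
  imports Main
begin

definition is_solution :: "nat \<Rightarrow> (nat \<Rightarrow> nat) \<Rightarrow> bool" where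
  "is_solution k x \<longleftrightarrow> (\<forall>i\<in>{1..k}. x i \<ge> 1) \<and> (\<Sum>i=1..<k. x i) = x k"

definition sol_in :: "nat \<Rightarrow> nat \<Rightarrow> (nat \<Rightarrow> nat) \<Rightarrow> bool" where
  "sol_in k n x \<longleftrightarrow> is_solution k x \<and> (\<forall>i\<in>{1..k}. x i \<le> n)"

definition zero_sum :: "nat \<Rightarrow> nat \<Rightarrow> (nat \<Rightarrow> nat) \<Rightarrow> (nat \<Rightarrow> nat) \<Rightarrow> bool" where
  "zero_sum k r \<chi> x \<longleftrightarrow> (\<Sum>i=1..k. \<chi> (x i)) mod r = 0"

definition S3_property :: "nat \<Rightarrow> nat \<Rightarrow> nat \<Rightarrow> bool" where
  "S3_property k r n \<longleftrightarrow>
     (\<forall>\<chi>. (\<forall>m\<in>{1..n}. \<chi> m < r) \<longrightarrow> (\<exists>x. sol_in k n x \<and> zero_sum k r \<chi> x))"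

definition S3 :: "nat \<Rightarrow> nat \<Rightarrow> nat" where
  "S3 k r = (LEAST n. n \<ge> 1 \<and> S3_property k r n)"

end

theory Submission
  imports Defs "HOL-Library.Ramsey"
begin

lemma S3_mono:
  assumes "S3_property k r n" "n \<le> n'"
  shows "S3_property k r n'"
  unfolding S3_property_def
proof (intro allI impI)
  fix \<chi> :: "nat \<Rightarrow> nat" assume "\<forall>m\<in>{1..n'}. \<chi> m < r"
  then have "\<forall>m\<in>{1..n}. \<chi> m < r" using assms(2) by auto
  then obtain x where "sol_in k n x" "zero_sum k r \<chi> x"
    using assms(1) unfolding S3_property_def by blast
  then show "\<exists>x. sol_in k n' x \<and> zero_sum k r \<chi> x"
    using assms(2) unfolding sol_in_def by force
qed

lemma telescope:
  fixes v :: "nat \<Rightarrow> nat"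
  assumes "\<And>i j. i \<le> j \<Longrightarrow> v i \<le> v j"
  shows "(\<Sum>j=1..<Suc m. v j - v (j-1)) = v m - v 0"
proof (induction m)
  case 0 then show ?case by simp
next
  case (Suc m)
  have "(\<Sum>j=1..<Suc (Suc m). v j - v (j-1)) = (\<Sum>j=1..<Suc m. v j - v (j-1)) + (v (Suc m) - v m)"
    by simp
  also have "\<dots> = v m - v 0 + (v (Suc m) - v m)" using Suc by simp
  also have "\<dots> = v (Suc m) - v 0" using assms[of 0 m] assms[of m "Suc m"] by simp
  finally show ?case .
qed

lemma S3_exists:
  assumes "k \<ge> 2"
  shows "\<exists>n. n \<ge> 1 \<and> S3_property k k n"
proof -
  obtain N :: nat where RN: "partn_lst {..<N} (replicate k k) 2"
    using ramsey_full by blast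
  define n where "n = max 1 N"
  have "S3_property k k n"
    unfolding S3_property_def
  proof (intro allI impI)
    fix \<chi> :: "nat \<Rightarrow> nat" assume chi: "\<forall>m\<in>{1..n}. \<chi> m < k"
    define f where "f A = \<chi> (Max A - Min A)" for A :: "nat set"
    have fP: "f \<in> nsets {..<N} 2 \<rightarrow> {..<k}"
    proof
      fix A assume "A \<in> nsets {..<N} 2"
      then obtain a b where ab: "A = {a,b}" "a < N" "b < N" "a \<noteq> b"
        by (auto elim: nsets2_E)
      have "Max A - Min A \<in> {1..n}" using ab unfolding n_def by auto
      then show "f A \<in> {..<k}" using chi unfolding f_def by auto
    qed
    obtain i H where i: "i < length (replicate k k)" and H: "H \<in> nsets {..<N} (replicate k k ! i)"
      and mono: "f ` (nsets H 2) \<subseteq> {i}"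
      using partn_lstE[OF RN fP] by auto
    have ik: "i < k" using i by simp
    have Hs: "H \<subseteq> {..<N}" "finite H" "card H = k" using H ik by (auto simp: nsets_def)
    obtain xs where xs: "sorted_wrt (<) xs" "set xs = H"
      using finite_set_strict_sorted[OF Hs(2)] by blast
    have lxs: "length xs = k"
      using xs Hs(3) by (metis distinct_card strict_sorted_iff xs(1))
    define v where "v j = xs ! j" for j
    have vlt: "v a < v b" if "a < b" "b < k" for a b
      using xs(1) that lxs unfolding v_def by (simp add: sorted_wrt_iff_nth_less)
    have vle: "v a \<le> v b" if "a \<le> b" "b < k" for a b
      using vlt[of a b] that by (cases "a = b") auto
    have vH: "v a \<in> H" if "a < k" for a using that xs(2) lxs unfolding v_def by auto
    have vN: "v a < N" if "a < k" for a using vH[OF that] Hs(1) by auto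
    have col: "\<chi> (v b - v a) = i" if "a < b" "b < k" for a b
    proof -
      have "{v a, v b} \<in> nsets H 2"
        using vH that vlt[OF that] by auto
      then have "f {v a, v b} \<in> f ` nsets H 2" by (rule imageI)
      then have "f {v a, v b} = i" using mono by blast
      moreover have "Max {v a, v b} = v b" "Min {v a, v b} = v a"
        using vlt[OF that] by auto
      ultimately show ?thesis unfolding f_def by simp
    qed
    define x where "x j = (if j < k then v j - v (j-1) else v (k-1) - v 0)" for j
    have xc: "\<chi> (x j) = i" if "j \<in> {1..k}" for j
      using that col[of "j-1" j] col[of 0 "k-1"] assms unfolding x_def by auto
    have xpos: "x j \<ge> 1" if "j \<in> {1..k}" for j
      using that vlt[of "j-1" j] vlt[of 0 "k-1"] assms unfolding x_def by auto
    have xle: "x j \<le> n" if "j \<in> {1..k}" for j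
      using that vN[of j] vN[of "k-1"] assms unfolding x_def n_def by auto
    define w where "w j = v (min j (k-1))" for j
    have wmono: "w a \<le> w b" if "a \<le> b" for a b
      using vle[of "min a (k-1)" "min b (k-1)"] that assms unfolding w_def by auto
    have "(\<Sum>j=1..<k. x j) = (\<Sum>j=1..<Suc (k-1). w j - w (j-1))"
      using assms by (intro sum.cong) (auto simp: x_def w_def)
    also have "\<dots> = w (k-1) - w 0" by (rule telescope) (rule wmono)
    also have "\<dots> = x k" unfolding x_def w_def by simp
    finally have "(\<Sum>j=1..<k. x j) = x k" .
    then have "sol_in k n x" unfolding sol_in_def is_solution_def using xpos xle by auto
    moreover have "(\<Sum>j=1..k. \<chi> (x j)) = k * i"
      using xc by simp
    then have "zero_sum k k \<chi> x" unfolding zero_sum_def by simp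
    ultimately show "\<exists>x. sol_in k n x \<and> zero_sum k k \<chi> x" by blast
  qed
  moreover have "n \<ge> 1" unfolding n_def by simp
  ultimately show ?thesis by blast
qed

lemma counterexample:
  fixes k :: nat
  assumes k3: "k \<ge> 3" and ko: "odd k"
  shows "\<not> S3_property k k (2 * (k*k - k - 1) - 1)"
proof
  define N where "N = 2 * (k*k - k - 1) - 1"
  define h where "h = (k+1) div 2"
  define c where "c y = (if k-1 \<le> y \<and> y \<le> k*k - 2*k then 1 else 0::nat)" for y
  define \<chi> where "\<chi> z = (if odd z then h else c (z div 2))" for z
  have h2: "2*h = k+1" using ko unfolding h_def by simp
  have hk: "h < k" using h2 k3 by simp
  assume "S3_property k k (2 * (k*k - k - 1) - 1)"
  moreover have "\<forall>m\<in>{1..N}. \<chi> m < k" using hk k3 unfolding \<chi>_def c_def by auto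
  ultimately obtain x where sol: "sol_in k N x" and zs: "zero_sum k k \<chi> x"
    unfolding S3_property_def N_def by blast
  define I where "I = {1..k::nat}"
  have xpos: "\<And>i. i \<in> I \<Longrightarrow> x i \<ge> 1" and xle: "\<And>i. i \<in> I \<Longrightarrow> x i \<le> N"
    and xsum: "(\<Sum>i=1..<k. x i) = x k"
    using sol unfolding sol_in_def is_solution_def I_def by auto
  define Od where "Od = {i\<in>I. odd (x i)}"
  define E where "E = {i\<in>I. \<not> odd (x i)}"
  have fin: "finite I" "finite Od" "finite E" unfolding I_def Od_def E_def by auto
  have cardOE: "card Od + card E = k"
  proof -
    have "card Od + card E = card (Od \<union> E)"
      by (rule card_Un_disjoint[symmetric]) (use fin in \<open>auto simp: Od_def E_def\<close>)
    also have "Od \<union> E = I" unfolding Od_def E_def by auto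
    finally show ?thesis unfolding I_def by simp
  qed
  have Isplit: "I = {1..<k} \<union> {k}" unfolding I_def using k3 by auto
  have "(\<Sum>i\<in>I. x i) = (\<Sum>i=1..<k. x i) + x k" unfolding Isplit by simp
  then have "even (\<Sum>i\<in>I. x i)" using xsum by simp
  then have evO: "even (card Od)" using even_sum_iff[OF fin(1), of x] unfolding Od_def by simp
  define S where "S = (\<Sum>i\<in>I. \<chi> (x i))"
  have Smod: "S mod k = 0" using zs unfolding zero_sum_def S_def I_def by simp
  have "S = (\<Sum>i\<in>I. if odd (x i) then h else c (x i div 2))" unfolding S_def \<chi>_def by simp
  also have "\<dots> = (\<Sum>i\<in>Od. h) + (\<Sum>i\<in>E. c (x i div 2))"
    by (subst sum.If_cases[OF fin(1)]) (simp add: Od_def E_def Int_def Collect_neg_eq[symmetric])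
  finally have Seq: "S = card Od * h + (\<Sum>i\<in>E. c (x i div 2))" by simp
  have cle: "c y \<le> 1" for y unfolding c_def by simp
  have qle: "(\<Sum>i\<in>E. c (x i div 2)) \<le> card E"
    using sum_mono[of E "\<lambda>i. c (x i div 2)" "\<lambda>_. 1"] cle by simp
  show False
  proof (cases "card Od = 0")
    case False
    then obtain j where j: "card Od = 2*j" "j \<ge> 1" using evO by (auto elim!: evenE)
    define q where "q = (\<Sum>i\<in>E. c (x i div 2))"
    have "card Od * h = j * (2*h)" using j by simp
    then have "card Od * h = j * k + j" using h2 by simp
    then have "S = j * k + (j + q)" using Seq unfolding q_def by simp
    then have "(j + q) mod k = 0" using Smod by simp
    moreover have "j + q < k" "j + q > 0" using qle cardOE j unfolding q_def by auto
    ultimately show False by simp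
  next
    case True
    then have allev: "\<And>i. i \<in> I \<Longrightarrow> even (x i)" using fin unfolding Od_def by auto
    have EI: "E = I" using allev unfolding E_def by auto
    define y where "y i = x i div 2" for i
    have xy: "\<And>i. i \<in> I \<Longrightarrow> x i = 2 * y i" using allev unfolding y_def by auto
    have ypos: "\<And>i. i \<in> I \<Longrightarrow> y i \<ge> 1" using xy xpos by fastforce
    have yle: "\<And>i. i \<in> I \<Longrightarrow> y i \<le> k*k - k - 2" using xy xle unfolding N_def by fastforce
    have "(\<Sum>i=1..<k. x i) = 2 * (\<Sum>i=1..<k. y i)"
      using xy unfolding I_def by (simp add: sum_distrib_left)
    then have ysum: "(\<Sum>i=1..<k. y i) = y k" using xsum xy[of k] k3 unfolding I_def by simp
    have SI: "S = (\<Sum>i\<in>I. c (y i))" using Seq True EI unfolding y_def by simp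
    have kI: "k \<in> I" unfolding I_def using k3 by simp
    have sub: "{1..<k} \<subseteq> I" unfolding I_def by auto
    have lowsum: "(\<Sum>i=1..<k. y i) \<ge> k - 1"
      using sum_mono[of "{1..<k}" "\<lambda>_. 1::nat" y] ypos sub by (auto simp: subset_iff)
    have kk: "k*k - 2*k + 1 = (k-1)*(k-1)" using k3
      by (cases k) (auto simp: algebra_simps)
    consider (z) "\<forall>i\<in>I. c (y i) = 0" | (o) "\<forall>i\<in>I. c (y i) = 1" | (m) a b where "a \<in> I" "b \<in> I" "c (y a) = 0" "c (y b) = 1"
    proof -
      have "c y = 0 \<or> c y = 1" for y unfolding c_def by simp
      then show ?thesis using that by blast
    qed
    then show False
    proof cases
      case m
      have "S = c (y a) + (\<Sum>i\<in>I-{a}. c (y i))"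
        unfolding SI using m fin(1) by (simp add: sum.remove)
      also have "\<dots> \<le> card (I - {a})"
        using sum_mono[of "I-{a}" "\<lambda>i. c (y i)" "\<lambda>_. 1"] cle m by simp
      also have "\<dots> = k - 1" using m fin(1) unfolding I_def by simp
      finally have S1: "S \<le> k - 1" .
      have "c (y b) \<le> S" unfolding SI using m fin(1) by (intro member_le_sum) auto
      then have "S \<ge> 1" using m by simp
      have "S < k" using S1 k3 by simp
      then have "S mod k = S" by simp
      then show False using Smod \<open>S \<ge> 1\<close> by simp
    next
      case o
      then have "\<forall>i\<in>I. k - 1 \<le> y i \<and> y i \<le> k*k - 2*k" by (auto simp: c_def split: if_splits)
      then have oo: "\<forall>i\<in>I. k - 1 \<le> y i" "y k \<le> k*k - 2*k" using kI by auto
      have "(\<Sum>i=1..<k. y i) \<ge> (\<Sum>i=1..<k. k - 1)"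
        using sub oo(1) by (intro sum_mono) auto
      then have "(\<Sum>i=1..<k. y i) \<ge> (k-1)*(k-1)" by simp
      then have "(k-1)*(k-1) \<le> k*k - 2*k" using ysum oo(2) by simp
      then show False using kk by simp
    next
      case z
      then have zz: "\<And>i. i \<in> I \<Longrightarrow> y i < k - 1 \<or> y i > k*k - 2*k" by (auto simp: c_def split: if_splits)
      have yk: "y k > k*k - 2*k" using zz[OF kI] lowsum ysum by simp
      show False
      proof (cases "\<exists>a\<in>{1..<k}. y a > k*k - 2*k")
        case True
        then obtain a where a: "a \<in> {1..<k}" "y a > k*k - 2*k" by blast
        have "(\<Sum>i=1..<k. y i) = y a + (\<Sum>i\<in>{1..<k}-{a}. y i)"
          using a by (simp add: sum.remove)
        moreover have "(\<Sum>i\<in>{1..<k}-{a}. y i) \<ge> (\<Sum>i\<in>{1..<k}-{a}. 1)"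
          using ypos sub by (intro sum_mono) auto
        moreover have "card ({1..<k}-{a}) = k - 2" using a by simp
        ultimately have "y k \<ge> k*k - 2*k + 1 + (k - 2)" using ysum a by simp
        moreover have "k*k - 2*k + 1 + (k-2) > k*k - k - 2" using k3 kk
          by (cases k) (auto simp: algebra_simps)
        ultimately show False using yle[OF kI] by simp
      next
        case False
        then have "\<And>i. i \<in> {1..<k} \<Longrightarrow> y i \<le> k - 2" using zz sub by fastforce
        then have "(\<Sum>i=1..<k. y i) \<le> (\<Sum>i=1..<k. k - 2)" by (intro sum_mono) auto
        then have "y k \<le> (k-1)*(k-2)" using ysum by simp
        moreover have "(k-1)*(k-2) \<le> k*k - 2*k" using k3 kk
          by (cases k) (auto simp: algebra_simps)
        ultimately show False using yk by simp
      qed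
    qed
  qed
qed

theorem proposition7:
  fixes k :: nat
  assumes "k \<ge> 3" and "odd k"
  shows "S3 k k \<ge> 2 * (k^2 - k - 1)"
proof -
  obtain n where n: "n \<ge> 1 \<and> S3_property k k n" using S3_exists assms by fastforce
  have L: "S3 k k \<ge> 1 \<and> S3_property k k (S3 k k)"
    unfolding S3_def by (rule LeastI[of _ n]) (rule n)
  show ?thesis
  proof (rule ccontr)
    assume "\<not> ?thesis"
    then have "S3 k k \<le> 2 * (k*k - k - 1) - 1" by (simp add: power2_eq_square)
    then have "S3_property k k (2 * (k*k - k - 1) - 1)" using L S3_mono by blast
    then show False using counterexample assms by blast
  qed
qed

end
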